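(* Assume the constraints $\mathcal A_{\mathbf w}$ are generic. For $\theta\in L_{\mathbb R}$ outside some locus of codimension $2$ (in particular, for every $\theta$ contained in at most one hyperplane of the form $n^\perp$ with $n\in\Lambda\setminus\{0\}$), every tropical disk type in $\mathfrak T_{\mathbf w}(\theta)$ is trivalent.
   Context: $\Lambda$ finite-rank lattice with skew form $\{\cdot,\cdot\}$, $L=\Lambda^\vee$, $p^*:\Lambda\to L$, $n\mapsto\{\cdot,n\}$; $\Lambda^+$ the nonzero elements of $\sigma\cap\Lambda$ for a strictly convex rational polyhedral cone $\sigma\subset\Lambda_{\mathbb R}$. $\{e_i\}_{i\in I}$ a finite collection of vectors in $\Lambda^+$, $v_i=p^*(e_i)$. A weight vector is $\mathbf w=(\mathbf w_i)_{i\in I}$, $\mathbf w_i=(w_{i1}\le\dots\le w_{il_i})$ positive integers. Tropical disks in $L_{\mathbb R}$: $\bar\Gamma$ a finite tree without bivalent vertices; $\Gamma$ the complement in $\bar\Gamma$ of all univalent vertices but one, $V_\infty$; positive integer weights $w$ on edges; a bijection $s\mapsto E_s$ from an index set $S$ to the non-compact edges; and a proper continuous map $h:\Gamma\to L_{\mathbb R}$ embedding each edge into an affine line of rational slope, balanced ($\sum_{E\ni V}w(E)u_{(V,E)}=0$, $u_{(V,E)}$ the primitive vector from $h(V)$ into $h(E)$) at every vertex $V\ne V_\infty$; up to isomorphism. Its type is the data $(\Gamma,w,\text{marking},(V,E)\mapsto u_{(V,E)})$; a type is trivalent if all vertices other than $V_\infty$ are trivalent. Degree $\Delta_{\mathbf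 w}$: $S=\{(i,j):i\in I,1\le j\le l_i\}$ and $w(E_{ij})u_{E_{ij}}=w_{ij}v_i$. Constraints $\mathcal A_{\mathbf w}=(A_{ij})$, $A_{ij}$ a translate of $e_i^\perp$ (generic, and mutually generic); $\delta\mathcal A_{\mathbf w}$ multiplies each $A_{ij}$ by $\delta>0$; a disk matches $\delta\mathcal A_{\mathbf w}$ if $h(E_{ij})\subset\delta A_{ij}$. $\mathfrak T_{\mathbf w,\delta}(\theta)$ is the set of types of disks of degree $\Delta_{\mathbf w}$ matching $\delta\mathcal A_{\mathbf w}$ with $h(V_\infty)=\theta$, and $\mathfrak T_{\mathbf w}(\theta)$ is the set of types $\tau$ such that for every $\epsilon>0$ and all sufficiently small $\delta>0$ there is $\theta'$ in the open $\epsilon$-ball about $\theta$ with $\tau\in\mathfrak T_{\mathbf w,\delta}(\theta')$. *)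

theory Defs
  imports "HOL-Analysis.Analysis"
begin

text \<open>The lattice \<Lambda> is identified with the integer points of real^'n
(a type-indexed coordinate space), \<Lambda>_R = real^'n, and L = \<Lambda>^dual is identified with
the integer points of real^'n via the standard dot product, so L_R = real^'n and
the pairing of theta in L_R with n in \<Lambda> is theta \<bullet> n.  The skew form is
{m,n} = m \<bullet> (Omega *v n) for an integer skew-symmetric matrix Omega, so that
p^*(n) = Omega *v n.\<close>

definition lattice_vec :: "real^'n \<Rightarrow> bool" where
  "lattice_vec x \<longleftrightarrow> (\<forall>k. x $ k \<in> \<int>)"

definition primitive_vec :: "real^'n \<Rightarrow> bool" where
  "primitive_vec x \<longleftrightarrow> lattice_vec x \<and> x \<noteq> 0 \<and>
     (\<forall>y (m::nat). lattice_vec y \<and> x = real m *\<^sub>R y \<longrightarrow> m = 1)"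

definition rat_poly_cone :: "(real^'n) set \<Rightarrow> bool" where
  "rat_poly_cone \<sigma> \<longleftrightarrow> (\<exists>G. finite G \<and> (\<forall>g\<in>G. lattice_vec g) \<and>
      \<sigma> = {x. \<exists>a. (\<forall>g\<in>G. a g \<ge> 0) \<and> x = (\<Sum>g\<in>G. a g *\<^sub>R g)})"

definition strictly_convex_cone :: "(real^'n) set \<Rightarrow> bool" where
  "strictly_convex_cone \<sigma> \<longleftrightarrow> \<sigma> \<inter> uminus ` \<sigma> = {0}"

definition Lambda_plus :: "(real^'n) set \<Rightarrow> (real^'n) set" where
  "Lambda_plus \<sigma> = {n. lattice_vec n \<and> n \<in> \<sigma> \<and> n \<noteq> 0}"

definition idx_set :: "('i \<Rightarrow> nat list) \<Rightarrow> ('i \<times> nat) set" where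
  "idx_set ww = {(i, j). 1 \<le> j \<and> j \<le> length (ww i)}"

definition wt :: "('i \<Rightarrow> nat list) \<Rightarrow> 'i \<times> nat \<Rightarrow> nat" where
  "wt ww s = ww (fst s) ! (snd s - 1)"

text \<open>A tropical disk type: vertices of \<Gamma> (including V_infinity), V_infinity, compact
edges (2-element vertex sets), the vertex to which the non-compact edge E_s is attached,
weights of compact / non-compact edges, primitive directions u_(V,E) for flags on compact
edges and for non-compact edges (pointing away from the vertex).\<close>
record ('i, 'v) tdtype =
  tverts :: "nat set"
  tinf :: nat
  tedges :: "nat set set"
  tattach :: "'i \<times> nat \<Rightarrow> nat"
  twc :: "nat set \<Rightarrow> nat"
  twn :: "'i \<times> nat \<Rightarrow> nat"
  tdir :: "nat \<Rightarrow> nat set \<Rightarrow> 'v"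
  tdirn :: "'i \<times> nat \<Rightarrow> 'v"

definition tdeg :: "('i \<times> nat) set \<Rightarrow> ('i, 'v) tdtype \<Rightarrow> nat \<Rightarrow> nat" where
  "tdeg S \<tau> V = card {e \<in> tedges \<tau>. V \<in> e} + card {s \<in> S. tattach \<tau> s = V}"

text \<open>(tau, hv) is a tropical disk with non-compact edges indexed by S, of type tau,
whose map h sends vertex V to hv V, each compact edge {V,V'} to the segment
[hv V, hv V'] and each non-compact edge E_s to the ray hv(attach s) + R_{\<ge>0} tdirn s.\<close>
definition is_tdisk :: "('i \<times> nat) set \<Rightarrow> ('i, real^'n) tdtype \<Rightarrow> (nat \<Rightarrow> real^'n) \<Rightarrow> bool" where
  "is_tdisk S \<tau> hv \<longleftrightarrow>
     finite (tverts \<tau>) \<and> tinf \<tau> \<in> tverts \<tau> \<and>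
     (\<forall>e\<in>tedges \<tau>. \<exists>a b. a \<in> tverts \<tau> \<and> b \<in> tverts \<tau> \<and> a \<noteq> b \<and> e = {a, b}) \<and>
     (\<forall>a\<in>tverts \<tau>. \<forall>b\<in>tverts \<tau>. (a, b) \<in> {(x, y). {x, y} \<in> tedges \<tau>}\<^sup>*) \<and>
     card (tedges \<tau>) + 1 = card (tverts \<tau>) \<and>
     (\<forall>s\<in>S. tattach \<tau> s \<in> tverts \<tau>) \<and>
     tdeg S \<tau> (tinf \<tau>) = 1 \<and>
     (\<forall>V\<in>tverts \<tau>. tdeg S \<tau> V \<noteq> 2) \<and>
     (\<forall>V\<in>tverts \<tau> - {tinf \<tau>}. tdeg S \<tau> V \<noteq> 1) \<and>
     (\<forall>e\<in>tedges \<tau>. twc \<tau> e > 0) \<and> (\<forall>s\<in>S. twn \<tau> s > 0) \<and>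
     (\<forall>V V'. {V, V'} \<in> tedges \<tau> \<and> V \<noteq> V' \<longrightarrow>
        primitive_vec (tdir \<tau> V {V, V'}) \<and>
        (\<exists>l>0. hv V' - hv V = l *\<^sub>R tdir \<tau> V {V, V'})) \<and>
     (\<forall>s\<in>S. primitive_vec (tdirn \<tau> s)) \<and>
     (\<forall>V\<in>tverts \<tau> - {tinf \<tau>}.
        (\<Sum>e\<in>{e \<in> tedges \<tau>. V \<in> e}. real (twc \<tau> e) *\<^sub>R tdir \<tau> V e) +
        (\<Sum>s\<in>{s \<in> S. tattach \<tau> s = V}. real (twn \<tau> s) *\<^sub>R tdirn \<tau> s) = 0)"

text \<open>Degree Delta_w: w(E_ij) u_(E_ij) = w_ij v_i with v_i = p^*(e_i) = Omega *v e_i.\<close>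
definition has_degree :: "real^'n^'n \<Rightarrow> ('i \<Rightarrow> real^'n) \<Rightarrow> ('i \<Rightarrow> nat list)
    \<Rightarrow> ('i, real^'n) tdtype \<Rightarrow> bool" where
  "has_degree \<Omega> e ww \<tau> \<longleftrightarrow>
     (\<forall>s\<in>idx_set ww. real (twn \<tau> s) *\<^sub>R tdirn \<tau> s = real (wt ww s) *\<^sub>R (\<Omega> *v e (fst s)))"

text \<open>Constraint A_ij = {x. x \<bullet> e_i = c_ij} (a translate of e_i^perp), scaled by delta.\<close>
definition matches :: "('i \<Rightarrow> real^'n) \<Rightarrow> ('i \<Rightarrow> nat list) \<Rightarrow> ('i \<times> nat \<Rightarrow> real) \<Rightarrow> real
    \<Rightarrow> ('i, real^'n) tdtype \<Rightarrow> (nat \<Rightarrow> real^'n) \<Rightarrow> bool" where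
  "matches e ww c \<delta> \<tau> hv \<longleftrightarrow>
     (\<forall>s\<in>idx_set ww. {hv (tattach \<tau> s) + t *\<^sub>R tdirn \<tau> s | t. t \<ge> 0}
                       \<subseteq> {x. x \<bullet> e (fst s) = \<delta> * c s})"

definition T_delta :: "real^'n^'n \<Rightarrow> ('i \<Rightarrow> real^'n) \<Rightarrow> ('i \<Rightarrow> nat list) \<Rightarrow> ('i \<times> nat \<Rightarrow> real)
    \<Rightarrow> real \<Rightarrow> real^'n \<Rightarrow> ('i, real^'n) tdtype set" where
  "T_delta \<Omega> e ww c \<delta> \<theta> = {\<tau>. \<exists>hv. is_tdisk (idx_set ww) \<tau> hv \<and> has_degree \<Omega> e ww \<tau> \<and>
       matches e ww c \<delta> \<tau> hv \<and> hv (tinf \<tau>) = \<theta>}"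

definition T_lim :: "real^'n^'n \<Rightarrow> ('i \<Rightarrow> real^'n) \<Rightarrow> ('i \<Rightarrow> nat list) \<Rightarrow> ('i \<times> nat \<Rightarrow> real)
    \<Rightarrow> real^'n \<Rightarrow> ('i, real^'n) tdtype set" where
  "T_lim \<Omega> e ww c \<theta> = {\<tau>. \<forall>\<epsilon>>0. \<exists>\<delta>0>0. \<forall>\<delta>. 0 < \<delta> \<and> \<delta> < \<delta>0 \<longrightarrow>
       (\<exists>\<theta>'. dist \<theta>' \<theta> < \<epsilon> \<and> \<tau> \<in> T_delta \<Omega> e ww c \<delta> \<theta>')}"

definition trivalent :: "('i \<times> nat) set \<Rightarrow> ('i, 'v) tdtype \<Rightarrow> bool" where
  "trivalent S \<tau> \<longleftrightarrow> (\<forall>V\<in>tverts \<tau> - {tinf \<tau>}. tdeg S \<tau> V = 3)"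

end

theory Submission
  imports Defs
begin


lemma hyper_null:
  fixes S :: "'a set" and q :: "'a \<Rightarrow> real"
  assumes fin: "finite S" and s0: "s0 \<in> S" and q0: "q s0 \<noteq> 0"
  shows "{c \<in> space (Pi\<^sub>M S (\<lambda>_. lborel)). (\<Sum>s\<in>S. q s * c s) = 0} \<in> null_sets (Pi\<^sub>M S (\<lambda>_. lborel))"
proof -
  interpret product_sigma_finite "\<lambda>_::'a. lborel :: real measure" by standard
  define A where "A = {c \<in> space (Pi\<^sub>M S (\<lambda>_. lborel)). (\<Sum>s\<in>S. q s * c s) = 0}"
  have meas: "(\<lambda>c. \<Sum>s\<in>S. q s * c s) \<in> borel_measurable (Pi\<^sub>M S (\<lambda>_. lborel))"
    using s0 by (intro borel_measurable_sum) (auto intro!: borel_measurable_times measurable_component_singleton)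
  have Aset: "A \<in> sets (Pi\<^sub>M S (\<lambda>_. lborel))"
    unfolding A_def using meas by measurable
  have ins: "insert s0 (S - {s0}) = S" using s0 by auto
  have "emeasure (Pi\<^sub>M S (\<lambda>_. lborel)) A = (\<integral>\<^sup>+ c. indicator A c \<partial>(Pi\<^sub>M S (\<lambda>_. lborel)))"
    using Aset by simp
  also have "\<dots> = (\<integral>\<^sup>+ x. (\<integral>\<^sup>+ y. indicator A (x(s0 := y)) \<partial>lborel) \<partial>(Pi\<^sub>M (S - {s0}) (\<lambda>_. lborel)))"
    using product_nn_integral_insert[of "S - {s0}" s0 "indicator A"] fin Aset ins
    by (simp add: ins)
  also have "\<dots> = (\<integral>\<^sup>+ x. 0 \<partial>(Pi\<^sub>M (S - {s0}) (\<lambda>_. lborel :: real measure)))"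
  proof (intro nn_integral_cong)
    fix x :: "'a \<Rightarrow> real"
    define y0 where "y0 = - (\<Sum>s\<in>S - {s0}. q s * x s) / q s0"
    have le: "indicator A (x(s0 := y)) \<le> (indicator {y0} y :: ennreal)" for y
    proof (cases "x(s0 := y) \<in> A")
      case True
      then have "(\<Sum>s\<in>S. q s * (x(s0 := y)) s) = 0" unfolding A_def by auto
      also have "(\<Sum>s\<in>S. q s * (x(s0 := y)) s) = q s0 * y + (\<Sum>s\<in>S - {s0}. q s * x s)"
        using fin s0 by (simp add: sum.remove[OF fin s0])
      finally have "y = y0" unfolding y0_def using q0 by (simp add: field_simps)
      then show ?thesis using True by simp
    qed simp
    have "(\<integral>\<^sup>+ y. indicator A (x(s0 := y)) \<partial>lborel) \<le> (\<integral>\<^sup>+ y. indicator {y0} y \<partial>lborel)"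
      by (rule nn_integral_mono) (rule le)
    also have "\<dots> = 0" by simp
    finally show "(\<integral>\<^sup>+ y. indicator A (x(s0 := y)) \<partial>lborel) = 0" by simp
  qed
  also have "\<dots> = 0" by simp
  finally show ?thesis using Aset unfolding A_def by (simp add: null_sets_def)
qed

lemma generic_null:
  fixes S :: "'a set"
  assumes fin: "finite S"
  shows "\<exists>N \<in> null_sets (Pi\<^sub>M S (\<lambda>_. lborel)). \<forall>c \<in> (\<Pi>\<^sub>E s\<in>S. UNIV) - N.
           \<forall>q::'a \<Rightarrow> int. (\<Sum>s\<in>S. real_of_int (q s) * c s) = 0 \<longrightarrow> (\<forall>s\<in>S. q s = 0)"
proof -
  define Q where "Q = {q \<in> (\<Pi>\<^sub>E s\<in>S. (UNIV::int set)). \<exists>s\<in>S. q s \<noteq> 0}"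
  define N where "N = (\<Union>q\<in>Q. {c \<in> space (Pi\<^sub>M S (\<lambda>_. lborel :: real measure)). (\<Sum>s\<in>S. real_of_int (q s) * c s) = 0})"
  have cQ: "countable Q"
    unfolding Q_def by (rule countable_subset[OF _ countable_PiE[OF fin]]) auto
  have "N \<in> null_sets (Pi\<^sub>M S (\<lambda>_. lborel))"
    unfolding N_def
  proof (rule null_sets_UN'[OF cQ])
    fix q assume "q \<in> Q"
    then obtain s0 where "s0 \<in> S" "q s0 \<noteq> 0" unfolding Q_def by auto
    then show "{c \<in> space (Pi\<^sub>M S (\<lambda>_. lborel :: real measure)). (\<Sum>s\<in>S. real_of_int (q s) * c s) = 0} \<in> null_sets (Pi\<^sub>M S (\<lambda>_. lborel))"
      using hyper_null[OF fin, of s0 "\<lambda>s. real_of_int (q s)"] by simp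
  qed
  moreover have "\<forall>c \<in> (\<Pi>\<^sub>E s\<in>S. UNIV) - N.
           \<forall>q::'a \<Rightarrow> int. (\<Sum>s\<in>S. real_of_int (q s) * c s) = 0 \<longrightarrow> (\<forall>s\<in>S. q s = 0)"
  proof (intro ballI allI impI)
    fix c q s assume c: "c \<in> (\<Pi>\<^sub>E s\<in>S. UNIV) - N" and eq: "(\<Sum>s\<in>S. real_of_int (q s) * c s) = 0" and s: "s \<in> S"
    show "q s = 0"
    proof (rule ccontr)
      assume "q s \<noteq> 0"
      define q' where "q' = restrict q S"
      have "q' \<in> Q" unfolding Q_def q'_def using s \<open>q s \<noteq> 0\<close> by auto
      moreover have "(\<Sum>s\<in>S. real_of_int (q' s) * c s) = 0" using eq unfolding q'_def by simp
      moreover have "c \<in> space (Pi\<^sub>M S (\<lambda>_. lborel :: real measure))" using c by (simp add: space_PiM)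
      ultimately have "c \<in> N" unfolding N_def by blast
      with c show False by simp
    qed
  qed
  ultimately show ?thesis by blast
qed

definition evl :: "'v set \<Rightarrow> ('v \<Rightarrow> int) \<Rightarrow> ('v \<Rightarrow> real) \<Rightarrow> real" where
  "evl X r x = (\<Sum>v\<in>X. real_of_int (r v) * x v)"

definition indep :: "'v set \<Rightarrow> 'j set \<Rightarrow> ('j \<Rightarrow> 'v \<Rightarrow> int) \<Rightarrow> bool" where
  "indep X J r \<longleftrightarrow> (\<forall>q. (\<forall>v\<in>X. (\<Sum>j\<in>J. q j * r j v) = 0) \<longrightarrow> (\<forall>j\<in>J. q j = 0))"

lemma elim_step:
  assumes fin: "finite J0" and ind: "indep X J0 r0" and j0: "j0 \<in> J0" and A: "r0 j0 z \<noteq> 0"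
  shows "indep X (J0 - {j0}) (\<lambda>j v. r0 j0 z * r0 j v - r0 j z * r0 j0 v)"
  unfolding indep_def
proof (intro allI impI ballI)
  fix q j
  assume h: "\<forall>v\<in>X. (\<Sum>j\<in>J0 - {j0}. q j * (r0 j0 z * r0 j v - r0 j z * r0 j0 v)) = 0"
    and j: "j \<in> J0 - {j0}"
  define q'' where "q'' = (\<lambda>i. if i = j0 then - (\<Sum>i\<in>J0 - {j0}. q i * r0 i z) else q i * r0 j0 z)"
  have "\<forall>v\<in>X. (\<Sum>i\<in>J0. q'' i * r0 i v) = 0"
  proof
    fix v assume v: "v \<in> X"
    have "(\<Sum>i\<in>J0. q'' i * r0 i v) = q'' j0 * r0 j0 v + (\<Sum>i\<in>J0 - {j0}. q'' i * r0 i v)"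
      by (rule sum.remove[OF fin j0])
    also have "(\<Sum>i\<in>J0 - {j0}. q'' i * r0 i v) = (\<Sum>i\<in>J0 - {j0}. q i * r0 j0 z * r0 i v)"
      by (rule sum.cong) (auto simp: q''_def)
    also have "q'' j0 * r0 j0 v = - (\<Sum>i\<in>J0 - {j0}. q i * r0 i z * r0 j0 v)"
      by (simp add: q''_def sum_distrib_right)
    finally have "(\<Sum>i\<in>J0. q'' i * r0 i v) = (\<Sum>i\<in>J0 - {j0}. q i * (r0 j0 z * r0 i v - r0 i z * r0 j0 v))"
      by (simp add: sum_subtractf[symmetric] algebra_simps)
    then show "(\<Sum>i\<in>J0. q'' i * r0 i v) = 0" using h v by simp
  qed
  then have "\<forall>i\<in>J0. q'' i = 0" using ind unfolding indep_def by blast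
  then have "q j * r0 j0 z = 0" using j unfolding q''_def by auto
  then show "q j = 0" using A by simp
qed

lemma elim:
  assumes finJ: "finite J" and ind: "indep X J r" and ann: "\<forall>j\<in>J. \<forall>x\<in>H. evl X (r j) x = 0"
  shows "finite Z \<Longrightarrow> Z \<subseteq> X \<Longrightarrow> card Z + t \<le> card J \<Longrightarrow>
    \<exists>J' r'. J' \<subseteq> J \<and> t \<le> card J' \<and> indep X J' r' \<and> (\<forall>j\<in>J'. \<forall>v\<in>Z. r' j v = 0)
       \<and> (\<forall>j\<in>J'. \<forall>x\<in>H. evl X (r' j) x = 0)"
proof (induction Z arbitrary: t rule: finite_induct)
  case empty
  then show ?case using ind ann by (intro exI[of _ J] exI[of _ r]) auto
next
  case (insert z Z0)
  then have "card Z0 + (t + 1) \<le> card J" by simp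
  from insert.IH[OF _ this] insert.prems obtain J0 r0 where J0: "J0 \<subseteq> J" "t + 1 \<le> card J0" "indep X J0 r0"
      "\<forall>j\<in>J0. \<forall>v\<in>Z0. r0 j v = 0" "\<forall>j\<in>J0. \<forall>x\<in>H. evl X (r0 j) x = 0"
    by blast
  have finJ0: "finite J0" using J0(1) finJ finite_subset by blast
  show ?case
  proof (cases "\<forall>j\<in>J0. r0 j z = 0")
    case True
    then show ?thesis using J0 by (intro exI[of _ J0] exI[of _ r0]) auto
  next
    case False
    then obtain j0 where j0: "j0 \<in> J0" "r0 j0 z \<noteq> 0" by auto
    define r' where "r' = (\<lambda>j v. r0 j0 z * r0 j v - r0 j z * r0 j0 v)"
    have "indep X (J0 - {j0}) r'" unfolding r'_def by (rule elim_step[OF finJ0 J0(3) j0])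
    moreover have "t \<le> card (J0 - {j0})" using J0(2) j0 finJ0 by simp
    moreover have "\<forall>j\<in>J0 - {j0}. \<forall>v\<in>insert z Z0. r' j v = 0"
      using J0(4) j0 unfolding r'_def by auto
    moreover have "\<forall>j\<in>J0 - {j0}. \<forall>x\<in>H. evl X (r' j) x = 0"
    proof (intro ballI)
      fix j x assume j: "j \<in> J0 - {j0}" and x: "x \<in> H"
      have "evl X (r' j) x = real_of_int (r0 j0 z) * evl X (r0 j) x - real_of_int (r0 j z) * evl X (r0 j0) x"
        unfolding evl_def r'_def by (simp add: sum_distrib_left sum_subtractf[symmetric] algebra_simps)
      then show "evl X (r' j) x = 0" using J0(5) j j0 x by simp
    qed
    ultimately show ?thesis using J0(1) by (intro exI[of _ "J0 - {j0}"] exI[of _ r']) auto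
  qed
qed



lemma pair_sub: "p \<in> Vs \<Longrightarrow> q \<in> Vs \<Longrightarrow> E = {p, q} \<Longrightarrow> E \<subseteq> Vs" by simp

lemma deg_sum:
  assumes "finite Vs" "finite Es" "\<forall>E\<in>Es. E \<subseteq> Vs"
  shows "(\<Sum>V\<in>Vs. card {E\<in>Es. V\<in>E}) = (\<Sum>E\<in>Es. card E)"
proof -
  have "(\<Sum>V\<in>Vs. card {E\<in>Es. V\<in>E}) = (\<Sum>V\<in>Vs. \<Sum>E\<in>Es. if V \<in> E then 1 else 0)"
    using assms by (simp add: sum.inter_filter[symmetric])
  also have "\<dots> = (\<Sum>E\<in>Es. \<Sum>V\<in>Vs. if V \<in> E then 1 else 0)" by (rule sum.swap)
  also have "\<dots> = (\<Sum>E\<in>Es. card E)"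
  proof (rule sum.cong[OF refl])
    fix E assume "E \<in> Es"
    then have "{V\<in>Vs. V\<in>E} = E" using assms by auto
    then show "(\<Sum>V\<in>Vs. if V \<in> E then 1 else 0) = card E"
      using assms by (simp add: sum.inter_filter[symmetric])
  qed
  finally show ?thesis .
qed

lemma conn_remove_leaf:
  assumes xy: "(x, y) \<in> {(x, y). {x, y} \<in> Es}\<^sup>*" and xv: "x \<noteq> v"
    and leaf: "\<forall>E\<in>Es. v \<in> E \<longrightarrow> E = E0" and E0: "E0 = {v, u}" "u \<noteq> v"
    and two: "\<forall>p q. {p, q} \<in> Es \<longrightarrow> p \<noteq> q"
  shows "(x, y) \<in> {(x, y). {x, y} \<in> Es - {E0}}\<^sup>* \<or> (y = v \<and> (x, u) \<in> {(x, y). {x, y} \<in> Es - {E0}}\<^sup>*)"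
  using xy
proof (induction rule: rtrancl_induct)
  case base
  then show ?case by simp
next
  case (step y y')
  let ?R = "{(x, y). {x, y} \<in> Es - {E0}}"
  from step.hyps(2) have e: "{y, y'} \<in> Es" by simp
  show ?case
  proof (cases "y' = v")
    case True
    then have "{y, v} = E0" using leaf[rule_format, OF e] by simp
    then have "{y, v} = {v, u}" using E0(1) by simp
    then have "y = u" by (auto simp: doubleton_eq_iff)
    then have "y \<noteq> v" using E0(2) by simp
    then have "(x, y) \<in> ?R\<^sup>*" using step.IH by blast
    then show ?thesis using True \<open>y = u\<close> by blast
  next
    case False
    show ?thesis
    proof (cases "y = v")
      case True
      then have "{v, y'} = E0" using leaf[rule_format, OF e] by simp
      then have "{v, y'} = {v, u}" using E0(1) by simp
      then have "y' = u" using False by (auto simp: doubleton_eq_iff)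
      have "\<not> (x, v) \<in> ?R\<^sup>*"
      proof
        assume "(x, v) \<in> ?R\<^sup>*"
        then show False
        proof (cases rule: rtranclE)
          case base then show ?thesis using xv by simp
        next
          case (step z)
          then have "{z, v} \<in> Es" "{z, v} \<noteq> E0" by auto
          then show ?thesis using leaf[rule_format, of "{z, v}"] by simp
        qed
      qed
      then have "(x, u) \<in> ?R\<^sup>*" using step.IH True by blast
      then show ?thesis using \<open>y' = u\<close> by blast
    next
      case yv: False
      have "v \<notin> {y, y'}" using False yv by simp
      then have "{y, y'} \<noteq> E0" using E0(1) by auto
      then have "(y, y') \<in> ?R" using e by simp
      moreover have "(x, y) \<in> ?R\<^sup>*" using step.IH yv by blast
      ultimately show ?thesis by (meson rtrancl.rtrancl_into_rtrancl)
    qed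
  qed
qed

lemma tree_flow:
  "card Vs = n \<Longrightarrow> finite Vs \<Longrightarrow> (\<forall>E\<in>Es. a E \<in> Vs \<and> b E \<in> Vs \<and> a E \<noteq> b E \<and> E = {a E, b E})
   \<Longrightarrow> (\<forall>x\<in>Vs. \<forall>y\<in>Vs. (x, y) \<in> {(x, y). {x, y} \<in> Es}\<^sup>*) \<Longrightarrow> card Es + 1 = card Vs
   \<Longrightarrow> (\<forall>V\<in>Vs. (\<Sum>E\<in>Es. f E * (of_bool (b E = V) - of_bool (a E = V))) = (0::int))
   \<Longrightarrow> \<forall>E\<in>Es. f E = 0"
proof (induction n arbitrary: Vs Es)
  case 0
  then show ?case by simp
next
  case (Suc m)
  have finE: "finite Es"
  proof (rule finite_subset[of Es "Pow Vs"])
    show "Es \<subseteq> Pow Vs"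
    proof
      fix E assume "E \<in> Es"
      then have "a E \<in> Vs" "b E \<in> Vs" "E = {a E, b E}" using Suc.prems(3) by blast+
      then have "E \<subseteq> Vs" by (rule pair_sub)
      then show "E \<in> Pow Vs" by simp
    qed
  qed (use Suc.prems(2) in simp)
  show ?case
  proof (cases "card Vs = 1")
    case True
    then have "card Es = 0" using Suc.prems(5) by simp
    then have "Es = {}" using finE by simp
    then show ?thesis by simp
  next
    case False
    then have c2: "card Vs \<ge> 2" using Suc.prems(1) by simp
    have sub: "\<forall>E\<in>Es. E \<subseteq> Vs"
    proof
      fix E assume "E \<in> Es"
      then have "a E \<in> Vs" "b E \<in> Vs" "E = {a E, b E}" using Suc.prems(3) by blast+
      then show "E \<subseteq> Vs" by (rule pair_sub)
    qed
    have c2E: "\<forall>E\<in>Es. card E = 2"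
    proof
      fix E assume "E \<in> Es"
      then have h: "a E \<noteq> b E" "{a E, b E} = E" using Suc.prems(3) by blast+
      have "card {a E, b E} = 2" using h(1) by simp
      then show "card E = 2" using h(2) by simp
    qed
    have "(\<Sum>V\<in>Vs. card {E\<in>Es. V\<in>E}) = (\<Sum>E\<in>Es. card E)"
      by (rule deg_sum[OF Suc.prems(2) finE sub])
    also have "\<dots> = 2 * card Es" using c2E by simp
    finally have dsum: "(\<Sum>V\<in>Vs. card {E\<in>Es. V\<in>E}) = 2 * card Es" .
    have "\<exists>v\<in>Vs. card {E\<in>Es. v\<in>E} < 2"
    proof (rule ccontr)
      assume "\<not> ?thesis"
      then have "(\<Sum>V\<in>Vs. 2) \<le> (\<Sum>V\<in>Vs. card {E\<in>Es. V\<in>E})"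
        by (intro sum_mono) (auto simp: not_less)
      then show False using dsum Suc.prems(5) by simp
    qed
    then obtain v where v: "v \<in> Vs" "card {E\<in>Es. v\<in>E} < 2" by blast
    have "card (Vs - {v}) \<noteq> 0" using c2 v(1) Suc.prems(2) by simp
    then have "Vs - {v} \<noteq> {}" by (metis card.empty)
    then obtain w where w: "w \<in> Vs" "w \<noteq> v" by blast
    have "(v, w) \<in> {(x, y). {x, y} \<in> Es}\<^sup>*" using Suc.prems(4) v(1) w(1) by blast
    then obtain x where "{v, x} \<in> Es" using w(2)
      by (cases rule: converse_rtranclE) auto
    then have ne: "{E\<in>Es. v\<in>E} \<noteq> {}" by auto
    have "finite {E\<in>Es. v\<in>E}" using finE by simp
    with ne have "card {E\<in>Es. v\<in>E} \<noteq> 0" by simp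
    with v(2) have "card {E\<in>Es. v\<in>E} = 1" by linarith
    then obtain E0 where E0set: "{E\<in>Es. v\<in>E} = {E0}" by (rule card_1_singletonE)
    then have E0: "E0 \<in> Es" "v \<in> E0" and leaf: "\<forall>E\<in>Es. v \<in> E \<longrightarrow> E = E0" by auto
    have ab: "a E0 \<in> Vs" "b E0 \<in> Vs" "a E0 \<noteq> b E0" "{a E0, b E0} = E0" using Suc.prems(3) E0(1) by blast+
    have vab: "v = a E0 \<or> v = b E0" using ab(4) E0(2) by blast
    have fE0: "f E0 = 0"
    proof -
      have "(\<Sum>E\<in>Es. f E * (of_bool (b E = v) - of_bool (a E = v))) = 0" using Suc.prems(6) v(1) by blast
      also have "(\<Sum>E\<in>Es. f E * (of_bool (b E = v) - of_bool (a E = v))) =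
          f E0 * (of_bool (b E0 = v) - of_bool (a E0 = v)) + (\<Sum>E\<in>Es - {E0}. f E * (of_bool (b E = v) - of_bool (a E = v)))"
        by (rule sum.remove[OF finE E0(1)])
      also have "(\<Sum>E\<in>Es - {E0}. f E * (of_bool (b E = v) - of_bool (a E = v))) = 0"
      proof (rule sum.neutral, intro ballI)
        fix E assume E: "E \<in> Es - {E0}"
        then have "v \<notin> E" using leaf by auto
        moreover have "a E \<in> E" "b E \<in> E" using Suc.prems(3) E by blast+
        ultimately show "f E * (of_bool (b E = v) - of_bool (a E = v)) = 0" by auto
      qed
      finally show ?thesis using ab(3) vab by auto
    qed
    define u where "u = (if a E0 = v then b E0 else a E0)"
    have u: "E0 = {v, u}" "u \<noteq> v" using ab(3,4) vab unfolding u_def by auto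
    let ?Vs = "Vs - {v}" and ?Es = "Es - {E0}"
    have p1: "card ?Vs = m" using Suc.prems(1) v(1) by simp
    have p2: "finite ?Vs" using Suc.prems(2) by simp
    have p3: "\<forall>E\<in>?Es. a E \<in> ?Vs \<and> b E \<in> ?Vs \<and> a E \<noteq> b E \<and> E = {a E, b E}"
    proof
      fix E assume E: "E \<in> ?Es"
      then have "v \<notin> E" using leaf by auto
      moreover have h: "a E \<in> Vs \<and> b E \<in> Vs \<and> a E \<noteq> b E \<and> E = {a E, b E}" using Suc.prems(3) E by blast
      moreover have "a E \<in> E" "b E \<in> E" using h by blast+
      ultimately show "a E \<in> ?Vs \<and> b E \<in> ?Vs \<and> a E \<noteq> b E \<and> E = {a E, b E}" by blast
    qed
    have two: "\<forall>p q. {p, q} \<in> Es \<longrightarrow> p \<noteq> q"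
    proof (intro allI impI)
      fix p q assume "{p, q} \<in> Es"
      then have "card {p, q} = 2" using c2E by blast
      then show "p \<noteq> q" by auto
    qed
    have p4: "\<forall>x\<in>?Vs. \<forall>y\<in>?Vs. (x, y) \<in> {(x, y). {x, y} \<in> ?Es}\<^sup>*"
    proof (intro ballI)
      fix x y assume x: "x \<in> ?Vs" and y: "y \<in> ?Vs"
      have "(x, y) \<in> {(x, y). {x, y} \<in> Es}\<^sup>*" using Suc.prems(4) x y by blast
      from conn_remove_leaf[OF this _ leaf u two] x y show "(x, y) \<in> {(x, y). {x, y} \<in> ?Es}\<^sup>*" by auto
    qed
    have p5: "card ?Es + 1 = card ?Vs" using Suc.prems(5) E0(1) v(1) finE Suc.prems(2) c2 by simp
    have p6: "\<forall>V\<in>?Vs. (\<Sum>E\<in>?Es. f E * (of_bool (b E = V) - of_bool (a E = V))) = (0::int)"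
    proof
      fix V assume V: "V \<in> ?Vs"
      have "(\<Sum>E\<in>Es. f E * (of_bool (b E = V) - of_bool (a E = V))) = 0" using Suc.prems(6) V by blast
      also have "(\<Sum>E\<in>Es. f E * (of_bool (b E = V) - of_bool (a E = V))) =
          f E0 * (of_bool (b E0 = V) - of_bool (a E0 = V)) + (\<Sum>E\<in>?Es. f E * (of_bool (b E = V) - of_bool (a E = V)))"
        by (rule sum.remove[OF finE E0(1)])
      finally show "(\<Sum>E\<in>?Es. f E * (of_bool (b E = V) - of_bool (a E = V))) = 0" using fE0 by simp
    qed
    have "\<forall>E\<in>?Es. f E = 0" by (rule Suc.IH[OF p1 p2 p3 p4 p5 p6])
    then show ?thesis using fE0 by auto
  qed
qed



definition ori :: "nat set \<Rightarrow> nat \<times> nat" where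
  "ori E = (SOME p. E = {fst p, snd p} \<and> fst p \<noteq> snd p)"

lemma ori: assumes "E = {a, b}" "a \<noteq> b"
  shows "E = {fst (ori E), snd (ori E)} \<and> fst (ori E) \<noteq> snd (ori E)"
proof -
  have "\<exists>p. E = {fst p, snd p} \<and> fst p \<noteq> snd p" using assms by (intro exI[of _ "(a, b)"]) simp
  then show ?thesis unfolding ori_def by (rule someI_ex)
qed

definition Xv :: "('i, 'a) tdtype \<Rightarrow> ((nat \<times> 'n) + nat set) set" where
  "Xv \<tau> = (tverts \<tau> \<times> UNIV) <+> tedges \<tau>"

definition rows :: "('i \<Rightarrow> real^'n) \<Rightarrow> ('i, real^'n) tdtype \<Rightarrow> (nat set \<times> 'n) + ('i \<times> nat)
    \<Rightarrow> (nat \<times> 'n) + nat set \<Rightarrow> int" where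
  "rows e \<tau> j v = (case j of
      Inl (E, p) \<Rightarrow> (case v of Inl (V, p') \<Rightarrow> if p' = p then of_bool (V = snd (ori E)) - of_bool (V = fst (ori E)) else 0
                          | Inr E' \<Rightarrow> if E' = E then - \<lfloor>tdir \<tau> (fst (ori E)) E $ p\<rfloor> else 0)
    | Inr s \<Rightarrow> (case v of Inl (V, p) \<Rightarrow> if V = tattach \<tau> s then \<lfloor>e (fst s) $ p\<rfloor> else 0 | Inr _ \<Rightarrow> 0))"

definition emb :: "(nat \<Rightarrow> real^'n) \<Rightarrow> (nat set \<Rightarrow> real) \<Rightarrow> (nat \<times> 'n) + nat set \<Rightarrow> real" where
  "emb z \<mu> v = (case v of Inl (V, p) \<Rightarrow> z V $ p | Inr E \<Rightarrow> \<mu> E)"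

lemma floor_lattice: "lattice_vec x \<Longrightarrow> real_of_int \<lfloor>x $ p\<rfloor> = x $ p"
  unfolding lattice_vec_def by (metis Ints_cases floor_of_int)

lemma ev_edge:
  fixes \<tau> :: "('i, real^'n) tdtype"
  assumes fV: "finite (tverts \<tau>)" and fE: "finite (tedges \<tau>)" and E: "E \<in> tedges \<tau>"
    and ab: "fst (ori E) \<in> tverts \<tau>" "snd (ori E) \<in> tverts \<tau>" "fst (ori E) \<noteq> snd (ori E)"
    and lat: "lattice_vec (tdir \<tau> (fst (ori E)) E)"
  shows "evl (Xv \<tau>) (rows e \<tau> (Inl (E, p))) (emb z \<mu>) =
     z (snd (ori E)) $ p - z (fst (ori E)) $ p - tdir \<tau> (fst (ori E)) E $ p * \<mu> E"
proof -
  let ?a = "fst (ori E)" and ?b = "snd (ori E)" and ?d = "tdir \<tau> (fst (ori E)) E"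
  have "evl (Xv \<tau>) (rows e \<tau> (Inl (E, p))) (emb z \<mu>) =
     (\<Sum>x\<in>tverts \<tau> \<times> UNIV. real_of_int (rows e \<tau> (Inl (E, p)) (Inl x)) * emb z \<mu> (Inl x)) +
     (\<Sum>E'\<in>tedges \<tau>. real_of_int (rows e \<tau> (Inl (E, p)) (Inr E')) * emb z \<mu> (Inr E'))"
    unfolding evl_def Xv_def using fV fE by (simp add: sum.Plus comp_def)
  also have "(\<Sum>x\<in>tverts \<tau> \<times> UNIV. real_of_int (rows e \<tau> (Inl (E, p)) (Inl x)) * emb z \<mu> (Inl x))
      = (\<Sum>V\<in>tverts \<tau>. \<Sum>p'\<in>UNIV. real_of_int (rows e \<tau> (Inl (E, p)) (Inl (V, p'))) * z V $ p')"
    unfolding sum.cartesian_product by (rule sum.cong) (auto simp: emb_def)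
  also have "\<dots> = (\<Sum>V\<in>tverts \<tau>. (of_bool (V = ?b) - of_bool (V = ?a)) * z V $ p)"
  proof (rule sum.cong[OF refl])
    fix V
    have "real_of_int (rows e \<tau> (Inl (E, p)) (Inl (V, p'))) * z V $ p' =
        (if p' = p then (of_bool (V = ?b) - of_bool (V = ?a)) * z V $ p else 0)" for p'
      by (simp add: rows_def)
    then show "(\<Sum>p'\<in>UNIV. real_of_int (rows e \<tau> (Inl (E, p)) (Inl (V, p'))) * z V $ p') =
        (of_bool (V = ?b) - of_bool (V = ?a)) * z V $ p"
      by (simp add: sum.delta')
  qed
  also have "\<dots> = (\<Sum>V\<in>tverts \<tau>. (if V = ?b then z V $ p else 0) - (if V = ?a then z V $ p else 0))"
    by (rule sum.cong) auto
  also have "\<dots> = z ?b $ p - z ?a $ p"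
    using ab fV by (simp add: sum_subtractf sum.delta)
  also have "(\<Sum>E'\<in>tedges \<tau>. real_of_int (rows e \<tau> (Inl (E, p)) (Inr E')) * emb z \<mu> (Inr E'))
      = - ?d $ p * \<mu> E"
  proof -
    have "real_of_int (rows e \<tau> (Inl (E, p)) (Inr E')) * emb z \<mu> (Inr E') = (if E' = E then - ?d $ p * \<mu> E else 0)" for E'
      using floor_lattice[OF lat, of p] by (simp add: rows_def emb_def)
    then show ?thesis using E fE by (simp add: sum.delta)
  qed
  finally show ?thesis by simp
qed

lemma ev_leg:
  fixes \<tau> :: "('i, real^'n) tdtype"
  assumes fV: "finite (tverts \<tau>)" and fE: "finite (tedges \<tau>)" and s: "tattach \<tau> s \<in> tverts \<tau>"
    and lat: "lattice_vec (e (fst s))"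
  shows "evl (Xv \<tau>) (rows e \<tau> (Inr s)) (emb z \<mu>) = z (tattach \<tau> s) \<bullet> e (fst s)"
proof -
  have "evl (Xv \<tau>) (rows e \<tau> (Inr s)) (emb z \<mu>) =
     (\<Sum>x\<in>tverts \<tau> \<times> UNIV. real_of_int (rows e \<tau> (Inr s) (Inl x)) * emb z \<mu> (Inl x)) +
     (\<Sum>E'\<in>tedges \<tau>. real_of_int (rows e \<tau> (Inr s) (Inr E')) * emb z \<mu> (Inr E'))"
    unfolding evl_def Xv_def using fV fE by (simp add: sum.Plus comp_def)
  also have "(\<Sum>E'\<in>tedges \<tau>. real_of_int (rows e \<tau> (Inr s) (Inr E')) * emb z \<mu> (Inr E')) = 0"
    by (simp add: rows_def)
  also have "(\<Sum>x\<in>tverts \<tau> \<times> UNIV. real_of_int (rows e \<tau> (Inr s) (Inl x)) * emb z \<mu> (Inl x))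
      = (\<Sum>V\<in>tverts \<tau>. \<Sum>p\<in>UNIV. real_of_int (rows e \<tau> (Inr s) (Inl (V, p))) * z V $ p)"
    unfolding sum.cartesian_product by (rule sum.cong) (auto simp: emb_def)
  also have "\<dots> = (\<Sum>p\<in>UNIV. \<Sum>V\<in>tverts \<tau>. real_of_int (rows e \<tau> (Inr s) (Inl (V, p))) * z V $ p)"
    by (rule sum.swap)
  also have "\<dots> = (\<Sum>p\<in>UNIV. e (fst s) $ p * z (tattach \<tau> s) $ p)"
  proof (rule sum.cong[OF refl])
    fix p
    have "real_of_int (rows e \<tau> (Inr s) (Inl (V, p))) * z V $ p =
        (if V = tattach \<tau> s then e (fst s) $ p * z (tattach \<tau> s) $ p else 0)" for V
      using floor_lattice[OF lat, of p] by (simp add: rows_def)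
    then show "(\<Sum>V\<in>tverts \<tau>. real_of_int (rows e \<tau> (Inr s) (Inl (V, p))) * z V $ p) =
        e (fst s) $ p * z (tattach \<tau> s) $ p"
      using s fV by (simp add: sum.delta')
  qed
  also have "\<dots> = z (tattach \<tau> s) \<bullet> e (fst s)"
    by (simp add: inner_vec_def mult.commute)
  finally show ?thesis by simp
qed

lemma disk_edge:
  assumes disk: "is_tdisk S \<tau> hv" and E: "E \<in> tedges \<tau>"
  shows "fst (ori E) \<in> tverts \<tau> \<and> snd (ori E) \<in> tverts \<tau> \<and> fst (ori E) \<noteq> snd (ori E) \<and>
    {fst (ori E), snd (ori E)} = E \<and> primitive_vec (tdir \<tau> (fst (ori E)) E) \<and>
    (\<exists>l>0. hv (snd (ori E)) - hv (fst (ori E)) = l *\<^sub>R tdir \<tau> (fst (ori E)) E)"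
proof -
  from disk E obtain a b where ab: "a \<in> tverts \<tau>" "b \<in> tverts \<tau>" "a \<noteq> b" "E = {a, b}"
    unfolding is_tdisk_def by blast
  from ori[OF ab(4) ab(3)] have o: "E = {fst (ori E), snd (ori E)}" "fst (ori E) \<noteq> snd (ori E)" by blast+
  have sub: "E \<subseteq> tverts \<tau>" using ab by blast
  have in1: "fst (ori E) \<in> tverts \<tau>" "snd (ori E) \<in> tverts \<tau>" using o(1) sub by blast+
  have "{fst (ori E), snd (ori E)} \<in> tedges \<tau>" using o(1) E by simp
  then have "primitive_vec (tdir \<tau> (fst (ori E)) {fst (ori E), snd (ori E)}) \<and>
        (\<exists>l>0. hv (snd (ori E)) - hv (fst (ori E)) = l *\<^sub>R tdir \<tau> (fst (ori E)) {fst (ori E), snd (ori E)})"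
    using disk o(2) unfolding is_tdisk_def by blast
  then show ?thesis using o in1 by simp
qed

lemma att_sum:
  assumes "finite Vs" "finite S" "\<forall>s\<in>S. f s \<in> Vs"
  shows "(\<Sum>V\<in>Vs. card {s\<in>S. f s = V}) = card S"
proof -
  have "(\<Sum>V\<in>Vs. card {s\<in>S. f s = V}) = (\<Sum>V\<in>Vs. \<Sum>s\<in>S. if f s = V then 1 else 0)"
    using assms by (simp add: sum.inter_filter[symmetric])
  also have "\<dots> = (\<Sum>s\<in>S. \<Sum>V\<in>Vs. if f s = V then 1 else 0)" by (rule sum.swap)
  also have "\<dots> = (\<Sum>s\<in>S. 1)"
    using assms by (intro sum.cong) (auto simp: sum.delta')
  finally show ?thesis by simp
qed

lemma lattice_vec_int: "lattice_vec (\<chi> p. real_of_int (f p))"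
  unfolding lattice_vec_def by simp

lemma key:
  fixes e :: "'i \<Rightarrow> real^'n" and \<tau> :: "('i, real^'n) tdtype" and S :: "('i \<times> nat) set"
    and c :: "'i \<times> nat \<Rightarrow> real"
  assumes finS: "finite S" and latt: "\<forall>i. lattice_vec (e i)"
    and gen: "\<forall>q::('i \<times> nat) \<Rightarrow> int. (\<Sum>s\<in>S. real_of_int (q s) * c s) = 0 \<longrightarrow> (\<forall>s\<in>S. q s = 0)"
    and disk: "is_tdisk S \<tau> hv1" and m1: "\<forall>s\<in>S. hv1 (tattach \<tau> s) \<bullet> e (fst s) = \<delta>1 * c s"
    and \<delta>1: "\<delta>1 \<noteq> 0"
    and nt: "\<not> trivalent S \<tau>"
  shows "\<exists>n1 n2. lattice_vec n1 \<and> n1 \<noteq> 0 \<and> lattice_vec n2 \<and> n2 \<noteq> 0 \<and> {x. x \<bullet> n1 = 0} \<noteq> {x. x \<bullet> n2 = 0} \<and>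
     (\<forall>z \<mu>. (\<forall>E\<in>tedges \<tau>. z (snd (ori E)) - z (fst (ori E)) = \<mu> E *\<^sub>R tdir \<tau> (fst (ori E)) E) \<and>
            (\<forall>s\<in>S. z (tattach \<tau> s) \<bullet> e (fst s) = 0) \<longrightarrow> z (tinf \<tau>) \<bullet> n1 = 0 \<and> z (tinf \<tau>) \<bullet> n2 = 0)"
proof -
  define Vs where "Vs = tverts \<tau>"
  define Es where "Es = tedges \<tau>"
  define root where "root = tinf \<tau>"
  define X :: "((nat \<times> 'n) + nat set) set" where "X = Xv \<tau>"
  define J :: "((nat set \<times> 'n) + ('i \<times> nat)) set" where "J = (Es \<times> UNIV) <+> S"
  define r where "r = rows e \<tau>"
  define Y :: "((nat \<times> 'n) + nat set) set" where "Y = Inl ` ({root} \<times> UNIV)"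
  define H where "H = {x. \<forall>j\<in>J. evl X (r j) x = 0}"
  have fV: "finite Vs" using disk unfolding is_tdisk_def Vs_def by blast
  have edge: "\<forall>E\<in>Es. fst (ori E) \<in> Vs \<and> snd (ori E) \<in> Vs \<and> fst (ori E) \<noteq> snd (ori E) \<and>
    {fst (ori E), snd (ori E)} = E \<and> primitive_vec (tdir \<tau> (fst (ori E)) E) \<and>
    (\<exists>l>0. hv1 (snd (ori E)) - hv1 (fst (ori E)) = l *\<^sub>R tdir \<tau> (fst (ori E)) E)"
    using disk_edge[OF disk] unfolding Es_def Vs_def by blast
  have fE: "finite Es"
  proof (rule finite_subset[of Es "Pow Vs"])
    show "Es \<subseteq> Pow Vs"
    proof
      fix E assume "E \<in> Es"
      then have h: "fst (ori E) \<in> Vs" "snd (ori E) \<in> Vs" "{fst (ori E), snd (ori E)} = E" using edge by blast+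
      show "E \<in> Pow Vs" by (intro PowI) (rule pair_sub[OF h(1) h(2) h(3)[symmetric]])
    qed
  qed (use fV in simp)
  have rootV: "root \<in> Vs" using disk unfolding is_tdisk_def Vs_def root_def by blast
  have att: "\<forall>s\<in>S. tattach \<tau> s \<in> Vs" using disk unfolding is_tdisk_def Vs_def by blast
  have conn: "\<forall>x\<in>Vs. \<forall>y\<in>Vs. (x, y) \<in> {(x, y). {x, y} \<in> Es}\<^sup>*"
    using disk unfolding is_tdisk_def Vs_def Es_def by blast
  have cardE: "card Es + 1 = card Vs" using disk unfolding is_tdisk_def Vs_def Es_def by blast
  have fX: "finite X" unfolding X_def Xv_def using fV fE by (simp add: Vs_def Es_def)
  have fJ: "finite J" unfolding J_def using fE finS by simp
  have latd: "\<forall>E\<in>Es. lattice_vec (tdir \<tau> (fst (ori E)) E)" using edge unfolding primitive_vec_def by blast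
  have evE: "evl X (r (Inl (E, p))) (emb z \<mu>) =
     z (snd (ori E)) $ p - z (fst (ori E)) $ p - tdir \<tau> (fst (ori E)) E $ p * \<mu> E" if "E \<in> Es" for E p z \<mu>
    unfolding X_def r_def using ev_edge[of \<tau> E] fV fE edge latd that unfolding Vs_def Es_def by blast
  have evS: "evl X (r (Inr s)) (emb z \<mu>) = z (tattach \<tau> s) \<bullet> e (fst s)" if "s \<in> S" for s z \<mu>
    unfolding X_def r_def using ev_leg[of \<tau> s e] fV fE att latt that unfolding Vs_def Es_def by blast
  have ind: "indep X J r"
    unfolding indep_def
  proof (intro allI impI)
    fix q :: "(nat set \<times> 'n) + ('i \<times> nat) \<Rightarrow> int"
    assume hq: "\<forall>v\<in>X. (\<Sum>j\<in>J. q j * r j v) = 0"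
    have "\<forall>E\<in>Es. \<exists>l. hv1 (snd (ori E)) - hv1 (fst (ori E)) = l *\<^sub>R tdir \<tau> (fst (ori E)) E"
      using edge by blast
    from bchoice[OF this] obtain l1 where
      l1: "\<forall>E\<in>Es. hv1 (snd (ori E)) - hv1 (fst (ori E)) = l1 E *\<^sub>R tdir \<tau> (fst (ori E)) E" by blast
    define x1 where "x1 = emb hv1 l1"
    have e0: "evl X (r (Inl (E, p))) x1 = 0" if E: "E \<in> Es" for E p
    proof -
      have "hv1 (snd (ori E)) - hv1 (fst (ori E)) - l1 E *\<^sub>R tdir \<tau> (fst (ori E)) E = 0" using l1 E by simp
      then have "(hv1 (snd (ori E)) - hv1 (fst (ori E)) - l1 E *\<^sub>R tdir \<tau> (fst (ori E)) E) $ p = 0" by simp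
      then show ?thesis using evE[OF E] unfolding x1_def by (simp add: mult.commute)
    qed
    have s0: "evl X (r (Inr s)) x1 = \<delta>1 * c s" if s: "s \<in> S" for s
      using evS[OF s] m1 s unfolding x1_def by simp
    have "(\<Sum>j\<in>J. real_of_int (q j) * evl X (r j) x1) = (\<Sum>j\<in>J. \<Sum>v\<in>X. real_of_int (q j) * (real_of_int (r j v) * x1 v))"
      unfolding evl_def by (simp add: sum_distrib_left)
    also have "\<dots> = (\<Sum>v\<in>X. \<Sum>j\<in>J. real_of_int (q j) * (real_of_int (r j v) * x1 v))"
      by (rule sum.swap)
    also have "\<dots> = (\<Sum>v\<in>X. real_of_int (\<Sum>j\<in>J. q j * r j v) * x1 v)"
      by (simp add: sum_distrib_right mult.assoc)
    also have "\<dots> = 0" using hq by simp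
    finally have tot: "(\<Sum>j\<in>J. real_of_int (q j) * evl X (r j) x1) = 0" .
    have "(\<Sum>j\<in>J. real_of_int (q j) * evl X (r j) x1) =
        (\<Sum>w\<in>Es \<times> UNIV. real_of_int (q (Inl w)) * evl X (r (Inl w)) x1) +
        (\<Sum>s\<in>S. real_of_int (q (Inr s)) * evl X (r (Inr s)) x1)"
      unfolding J_def using fE finS by (simp add: sum.Plus comp_def)
    also have "(\<Sum>w\<in>Es \<times> UNIV. real_of_int (q (Inl w)) * evl X (r (Inl w)) x1) = 0"
      by (rule sum.neutral) (auto simp: e0)
    also have "(\<Sum>s\<in>S. real_of_int (q (Inr s)) * evl X (r (Inr s)) x1) = \<delta>1 * (\<Sum>s\<in>S. real_of_int (q (Inr s)) * c s)"
      by (simp add: s0 sum_distrib_left algebra_simps)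
    finally have "(\<Sum>s\<in>S. real_of_int (q (Inr s)) * c s) = 0" using tot \<delta>1 by simp
    then have qs: "\<forall>s\<in>S. q (Inr s) = 0" using gen[rule_format, of "\<lambda>s. q (Inr s)"] by blast
    have qe: "\<forall>E\<in>Es. q (Inl (E, p)) = 0" for p
    proof (rule tree_flow[of Vs "card Vs" Es "\<lambda>E. fst (ori E)" "\<lambda>E. snd (ori E)"])
      show "\<forall>E\<in>Es. fst (ori E) \<in> Vs \<and> snd (ori E) \<in> Vs \<and> fst (ori E) \<noteq> snd (ori E) \<and> E = {fst (ori E), snd (ori E)}"
        using edge by metis
      show "\<forall>V\<in>Vs. (\<Sum>E\<in>Es. q (Inl (E, p)) * (of_bool (snd (ori E) = V) - of_bool (fst (ori E) = V))) = 0"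
      proof
        fix V assume V: "V \<in> Vs"
        have XV: "Inl (V, p) \<in> X" unfolding X_def Xv_def using V unfolding Vs_def by (intro InlI) simp
        have "(\<Sum>j\<in>J. q j * r j (Inl (V, p))) =
            (\<Sum>w\<in>Es \<times> UNIV. q (Inl w) * r (Inl w) (Inl (V, p))) + (\<Sum>s\<in>S. q (Inr s) * r (Inr s) (Inl (V, p)))"
          unfolding J_def using fE finS by (simp add: sum.Plus comp_def)
        also have "(\<Sum>s\<in>S. q (Inr s) * r (Inr s) (Inl (V, p))) = 0" using qs by simp
        also have "(\<Sum>w\<in>Es \<times> UNIV. q (Inl w) * r (Inl w) (Inl (V, p))) =
            (\<Sum>E\<in>Es. \<Sum>p'\<in>UNIV. q (Inl (E, p')) * r (Inl (E, p')) (Inl (V, p)))"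
          unfolding sum.cartesian_product by (rule sum.cong) auto
        also have "\<dots> = (\<Sum>E\<in>Es. q (Inl (E, p)) * (of_bool (snd (ori E) = V) - of_bool (fst (ori E) = V)))"
        proof (rule sum.cong[OF refl])
          fix E
          have "q (Inl (E, p')) * r (Inl (E, p')) (Inl (V, p)) =
              (if p' = p then q (Inl (E, p)) * (of_bool (snd (ori E) = V) - of_bool (fst (ori E) = V)) else 0)" for p'
            unfolding r_def rows_def by (auto simp: eq_commute)
          then show "(\<Sum>p'\<in>UNIV. q (Inl (E, p')) * r (Inl (E, p')) (Inl (V, p))) =
              q (Inl (E, p)) * (of_bool (snd (ori E) = V) - of_bool (fst (ori E) = V))"
            by (simp add: sum.delta')
        qed
        finally show "(\<Sum>E\<in>Es. q (Inl (E, p)) * (of_bool (snd (ori E) = V) - of_bool (fst (ori E) = V))) = 0"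
          using hq XV by simp
      qed
    qed (use fV conn cardE in auto)
    show "\<forall>j\<in>J. q j = 0"
    proof
      fix j assume "j \<in> J"
      then consider (E) E p where "j = Inl (E, p)" "E \<in> Es" | (s) s where "j = Inr s" "s \<in> S"
        unfolding J_def by auto
      then show "q j = 0" using qe qs by cases auto
    qed
  qed
  have count: "card (X - Y) + 2 \<le> card J"
  proof -
    have sub: "\<forall>E\<in>Es. E \<subseteq> Vs"
    proof
      fix E assume "E \<in> Es"
      then have h: "fst (ori E) \<in> Vs" "snd (ori E) \<in> Vs" "{fst (ori E), snd (ori E)} = E" using edge by blast+
      show "E \<subseteq> Vs" by (rule pair_sub[OF h(1) h(2) h(3)[symmetric]])
    qed
    have c2: "\<forall>E\<in>Es. card E = 2"
    proof
      fix E assume "E \<in> Es"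
      then have h: "fst (ori E) \<noteq> snd (ori E)" "{fst (ori E), snd (ori E)} = E" using edge by blast+
      have "card {fst (ori E), snd (ori E)} = 2" using h(1) by simp
      then show "card E = 2" using h(2) by simp
    qed
    have tsum: "(\<Sum>V\<in>Vs. tdeg S \<tau> V) = 2 * card Es + card S"
    proof -
      have "(\<Sum>V\<in>Vs. tdeg S \<tau> V) = (\<Sum>V\<in>Vs. card {E\<in>Es. V \<in> E}) + (\<Sum>V\<in>Vs. card {s\<in>S. tattach \<tau> s = V})"
        unfolding tdeg_def Es_def by (simp add: sum.distrib)
      also have "(\<Sum>V\<in>Vs. card {E\<in>Es. V \<in> E}) = (\<Sum>E\<in>Es. card E)" by (rule deg_sum[OF fV fE sub])
      also have "\<dots> = 2 * card Es" using c2 by simp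
      also have "(\<Sum>V\<in>Vs. card {s\<in>S. tattach \<tau> s = V}) = card S" by (rule att_sum[OF fV finS att])
      finally show ?thesis .
    qed
    have ge3: "3 \<le> tdeg S \<tau> V" if V: "V \<in> Vs - {root}" for V
    proof -
      have n2: "tdeg S \<tau> V \<noteq> 2" "tdeg S \<tau> V \<noteq> 1"
        using disk V unfolding is_tdisk_def Vs_def root_def by blast+
      have "(V, root) \<in> {(x, y). {x, y} \<in> Es}\<^sup>*" using conn V rootV by blast
      then obtain x where "{V, x} \<in> Es" using V by (cases rule: converse_rtranclE) auto
      then have "{V, x} \<in> {E\<in>Es. V \<in> E}" by simp
      moreover have "finite {E\<in>Es. V \<in> E}" using fE by simp
      ultimately have "card {E\<in>Es. V \<in> E} \<noteq> 0" by (metis card_0_eq empty_iff)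
      then have "tdeg S \<tau> V \<noteq> 0" unfolding tdeg_def Es_def by simp
      with n2 show ?thesis by linarith
    qed
    obtain V0 where V0: "V0 \<in> Vs - {root}" "tdeg S \<tau> V0 \<noteq> 3"
      using nt unfolding trivalent_def Vs_def root_def by blast
    have "(\<Sum>V\<in>Vs - {root}. 3) < (\<Sum>V\<in>Vs - {root}. tdeg S \<tau> V)"
    proof (rule sum_strict_mono_ex1)
      show "finite (Vs - {root})" using fV by simp
      show "\<forall>x\<in>Vs - {root}. 3 \<le> tdeg S \<tau> x" using ge3 by blast
      show "\<exists>a\<in>Vs - {root}. 3 < tdeg S \<tau> a" using V0 ge3[OF V0(1)] by (intro bexI[OF _ V0(1)]) linarith
    qed
    then have lt: "3 * (card Vs - 1) < (\<Sum>V\<in>Vs - {root}. tdeg S \<tau> V)" using fV rootV by simp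
    have troot: "tdeg S \<tau> root = 1" using disk unfolding is_tdisk_def root_def by blast
    have "(\<Sum>V\<in>Vs. tdeg S \<tau> V) = tdeg S \<tau> root + (\<Sum>V\<in>Vs - {root}. tdeg S \<tau> V)"
      by (rule sum.remove[OF fV rootV])
    with tsum troot lt cardE have mk: "card Es + 2 \<le> card S" by simp
    have cJ: "card J = card Es * CARD('n) + card S"
      unfolding J_def using fE finS by (simp add: card_Plus card_cartesian_product)
    have cX: "card X = card Vs * CARD('n) + card Es"
      unfolding X_def Xv_def using fV fE by (simp add: card_Plus card_cartesian_product Vs_def Es_def)
    have YX: "Y \<subseteq> X" unfolding Y_def X_def Xv_def using rootV unfolding Vs_def by auto
    have cY: "card Y = CARD('n)"
    proof -
      have "card Y = card ({root} \<times> (UNIV :: 'n set))" unfolding Y_def by (rule card_image) (auto intro: inj_onI)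
      then show ?thesis by (simp add: card_cartesian_product_singleton)
    qed
    have "card (X - Y) = card X - card Y" by (rule card_Diff_subset[OF finite_subset[OF YX fX] YX])
    moreover have "card X = card Es * CARD('n) + card Es + CARD('n)"
      using cX cardE[symmetric] by (simp add: algebra_simps)
    ultimately have "card (X - Y) = card Es * CARD('n) + card Es" using cY by simp
    then show ?thesis using cJ mk by simp
  qed
  have "X - Y \<subseteq> X" by blast
  from elim[OF fJ ind, of H, OF _ _ this count] fX
  obtain J' r' where J': "J' \<subseteq> J" "2 \<le> card J'" "indep X J' r'" "\<forall>j\<in>J'. \<forall>v\<in>X - Y. r' j v = 0"
      "\<forall>j\<in>J'. \<forall>x\<in>H. evl X (r' j) x = 0"
    unfolding H_def by auto
  have fJ': "finite J'" using J'(1) fJ finite_subset by blast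
  obtain j1 where j1: "j1 \<in> J'" using J'(2) by fastforce
  have "card (J' - {j1}) \<ge> 1" using J'(2) j1 fJ' by simp
  then have "J' - {j1} \<noteq> {}" by (metis card.empty not_one_le_zero)
  then obtain j2 where j2: "j2 \<in> J'" "j2 \<noteq> j1" by blast
  define a1 where "a1 = r' j1"
  define a2 where "a2 = r' j2"
  have pind: "q1 = 0 \<and> q2 = 0" if h: "\<forall>v\<in>X. q1 * a1 v + q2 * a2 v = 0" for q1 q2
  proof -
    define q where "q = (\<lambda>j. if j = j1 then q1 else if j = j2 then q2 else 0)"
    have "\<forall>v\<in>X. (\<Sum>j\<in>J'. q j * r' j v) = 0"
    proof
      fix v assume v: "v \<in> X"
      have "(\<Sum>j\<in>J'. q j * r' j v) = (\<Sum>j\<in>{j1, j2}. q j * r' j v)"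
        by (rule sum.mono_neutral_right) (use fJ' j1 j2 in \<open>auto simp: q_def\<close>)
      also have "\<dots> = q1 * a1 v + q2 * a2 v" using j2(2) by (simp add: q_def a1_def a2_def)
      finally show "(\<Sum>j\<in>J'. q j * r' j v) = 0" using h v by simp
    qed
    then have "\<forall>j\<in>J'. q j = 0" using J'(3) unfolding indep_def by blast
    then have "q j1 = 0" "q j2 = 0" using j1 j2 by blast+
    then show ?thesis using j2(2) unfolding q_def by simp
  qed
  have van1: "\<forall>v\<in>X - Y. a1 v = 0" and van2: "\<forall>v\<in>X - Y. a2 v = 0"
    using J'(4) j1 j2 unfolding a1_def a2_def by auto
  have YX: "Y \<subseteq> X" unfolding Y_def X_def Xv_def using rootV by (auto simp: Vs_def)
  have evY: "evl X a x = (\<Sum>p\<in>UNIV. real_of_int (a (Inl (root, p))) * x (Inl (root, p)))"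
    if van: "\<forall>v\<in>X - Y. a v = 0" for a x
  proof -
    have "evl X a x = (\<Sum>v\<in>Y. real_of_int (a v) * x v)"
      unfolding evl_def by (rule sum.mono_neutral_right) (use fX YX van in auto)
    also have "\<dots> = (\<Sum>p\<in>UNIV. real_of_int (a (Inl (root, p))) * x (Inl (root, p)))"
    proof -
      have "Y = (\<lambda>p. Inl (root, p)) ` UNIV" unfolding Y_def by auto
      moreover have "inj (\<lambda>p. Inl (root, p) :: (nat \<times> 'n) + nat set)" by (auto intro: injI)
      ultimately show ?thesis by (simp add: sum.reindex)
    qed
    finally show ?thesis .
  qed
  define n1 where "n1 = (\<chi> p. real_of_int (a1 (Inl (root, p))))"
  define n2 where "n2 = (\<chi> p. real_of_int (a2 (Inl (root, p))))"
  have evn: "evl X a (emb z \<mu>) = z root \<bullet> (\<chi> p. real_of_int (a (Inl (root, p))))"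
    if van: "\<forall>v\<in>X - Y. a v = 0" for a z \<mu>
    using evY[OF van] by (simp add: inner_vec_def emb_def mult.commute)
  have main: "z root \<bullet> n1 = 0 \<and> z root \<bullet> n2 = 0"
    if hz: "\<forall>E\<in>tedges \<tau>. z (snd (ori E)) - z (fst (ori E)) = \<mu> E *\<^sub>R tdir \<tau> (fst (ori E)) E"
      and hs: "\<forall>s\<in>S. z (tattach \<tau> s) \<bullet> e (fst s) = 0" for z \<mu>
  proof -
    have "emb z \<mu> \<in> H" unfolding H_def
    proof (intro CollectI ballI)
      fix j assume "j \<in> J"
      then consider (E) E p where "j = Inl (E, p)" "E \<in> Es" | (s) s where "j = Inr s" "s \<in> S"
        unfolding J_def by auto
      then show "evl X (r j) (emb z \<mu>) = 0"
      proof cases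
        case E
        have "z (snd (ori E)) - z (fst (ori E)) - \<mu> E *\<^sub>R tdir \<tau> (fst (ori E)) E = 0"
          using hz E(2) unfolding Es_def by simp
        then have "(z (snd (ori E)) - z (fst (ori E)) - \<mu> E *\<^sub>R tdir \<tau> (fst (ori E)) E) $ p = 0" by simp
        then show ?thesis using evE[OF E(2)] E(1) by (simp add: mult.commute)
      next
        case s
        then show ?thesis using evS[OF s(2)] hs by simp
      qed
    qed
    then have "evl X a1 (emb z \<mu>) = 0" "evl X a2 (emb z \<mu>) = 0"
      using J'(5) j1 j2 unfolding a1_def a2_def by blast+
    then show ?thesis using evn[OF van1] evn[OF van2] unfolding n1_def n2_def by simp
  qed
  have allX: "\<forall>v\<in>X. a v = 0" if h1: "\<forall>p. a (Inl (root, p)) = 0" and h2: "\<forall>v\<in>X - Y. a v = 0" for a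
  proof
    fix v assume v: "v \<in> X"
    show "a v = 0"
    proof (cases "v \<in> Y")
      case True
      then obtain p where "v = Inl (root, p)" unfolding Y_def by auto
      then show ?thesis using h1 by simp
    next
      case False
      then show ?thesis using h2 v by simp
    qed
  qed
  have n1nz: "n1 \<noteq> 0"
  proof
    assume "n1 = 0"
    then have "\<forall>p. a1 (Inl (root, p)) = 0" unfolding n1_def by (simp add: vec_eq_iff)
    then have "\<forall>v\<in>X. a1 v = 0" using allX van1 by blast
    then have "\<forall>v\<in>X. 1 * a1 v + 0 * a2 v = 0" by simp
    then show False using pind[of 1 0] by simp
  qed
  have n2nz: "n2 \<noteq> 0"
  proof
    assume "n2 = 0"
    then have "\<forall>p. a2 (Inl (root, p)) = 0" unfolding n2_def by (simp add: vec_eq_iff)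
    then have "\<forall>v\<in>X. a2 v = 0" using allX van2 by blast
    then have "\<forall>v\<in>X. 0 * a1 v + 1 * a2 v = 0" by simp
    then show False using pind[of 0 1] by simp
  qed
  have hyp: "{x. x \<bullet> n1 = 0} \<noteq> {x. x \<bullet> n2 = 0}"
  proof
    assume eq: "{x. x \<bullet> n1 = 0} = {x. x \<bullet> n2 = 0}"
    obtain p0 where p0: "n1 $ p0 \<noteq> 0" using n1nz by (auto simp: vec_eq_iff)
    have rel: "n1 $ p0 * n2 $ p - n1 $ p * n2 $ p0 = 0" for p
    proof -
      define x where "x = (n1 $ p0) *\<^sub>R axis p (1::real) - (n1 $ p) *\<^sub>R axis p0 1"
      have "x \<bullet> n1 = 0" unfolding x_def by (simp add: inner_diff_left inner_axis')
      then have "x \<bullet> n2 = 0" using eq by blast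
      then show ?thesis unfolding x_def by (simp add: inner_diff_left inner_axis')
    qed
    define q1 where "q1 = - a2 (Inl (root, p0))"
    define q2 where "q2 = a1 (Inl (root, p0))"
    have "\<forall>v\<in>X. q1 * a1 v + q2 * a2 v = 0"
    proof
      fix v assume v: "v \<in> X"
      show "q1 * a1 v + q2 * a2 v = 0"
      proof (cases "v \<in> Y")
        case True
        then obtain p where p: "v = Inl (root, p)" unfolding Y_def by auto
        have "real_of_int (q1 * a1 v + q2 * a2 v) = 0"
          using rel[of p] unfolding p q1_def q2_def n1_def n2_def by (simp add: algebra_simps)
        then show ?thesis by (simp only: of_int_eq_0_iff)
      next
        case False
        then show ?thesis using van1 van2 v by simp
      qed
    qed
    then have "q2 = 0" using pind[of q1 q2] by blast
    then show False using p0 unfolding q2_def n1_def by simp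
  qed
  have l1: "lattice_vec n1" unfolding n1_def by (rule lattice_vec_int)
  have l2: "lattice_vec n2" unfolding n2_def by (rule lattice_vec_int)
  show ?thesis
    apply (rule exI[of _ n1], rule exI[of _ n2])
    using n1nz n2nz hyp l1 l2 main unfolding root_def by blast
qed

lemma disk_legs:
  assumes "matches e ww c \<delta> \<tau> hv" "s \<in> idx_set ww"
  shows "hv (tattach \<tau> s) \<bullet> e (fst s) = \<delta> * c s"
proof -
  have "hv (tattach \<tau> s) + 0 *\<^sub>R tdirn \<tau> s \<in> {hv (tattach \<tau> s) + t *\<^sub>R tdirn \<tau> s | t. t \<ge> 0}" by blast
  then have "hv (tattach \<tau> s) + 0 *\<^sub>R tdirn \<tau> s \<in> {x. x \<bullet> e (fst s) = \<delta> * c s}"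
    using assms unfolding matches_def by blast
  then show ?thesis by simp
qed

lemma abs_le_eps: fixes a :: real assumes "\<forall>\<epsilon>>0. \<bar>a\<bar> \<le> C * \<epsilon>" "C > 0" shows "a = 0"
proof (rule ccontr)
  assume "a \<noteq> 0"
  then have "\<bar>a\<bar> / (2 * C) > 0" using assms(2) by simp
  then have "\<bar>a\<bar> \<le> C * (\<bar>a\<bar> / (2 * C))" using assms(1) by blast
  also have "\<dots> = \<bar>a\<bar> / 2" using assms(2) by simp
  finally show False using \<open>a \<noteq> 0\<close> by simp
qed

lemma lim_zero:
  fixes e :: "'i \<Rightarrow> real^'n" and \<tau> :: "('i, real^'n) tdtype"
  assumes \<tau>: "\<tau> \<in> T_lim \<Omega> e ww c \<theta>"
    and P: "\<forall>z \<mu>. (\<forall>E\<in>tedges \<tau>. z (snd (ori E)) - z (fst (ori E)) = \<mu> E *\<^sub>R tdir \<tau> (fst (ori E)) E) \<and>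
            (\<forall>s\<in>idx_set ww. z (tattach \<tau> s) \<bullet> e (fst s) = 0) \<longrightarrow> z (tinf \<tau>) \<bullet> n = 0"
  shows "\<theta> \<bullet> n = 0"
proof (rule abs_le_eps[of _ "norm n + 1"])
  show "norm n + 1 > 0" by (simp add: add_nonneg_pos)
  show "\<forall>\<epsilon>>0. \<bar>\<theta> \<bullet> n\<bar> \<le> (norm n + 1) * \<epsilon>"
  proof (intro allI impI)
    fix \<epsilon> :: real assume \<epsilon>: "\<epsilon> > 0"
    from \<tau> \<epsilon> obtain \<delta>0 where \<delta>0: "\<delta>0 > 0" and
      h: "\<forall>\<delta>. 0 < \<delta> \<and> \<delta> < \<delta>0 \<longrightarrow> (\<exists>\<theta>'. dist \<theta>' \<theta> < \<epsilon> \<and> \<tau> \<in> T_delta \<Omega> e ww c \<delta> \<theta>')"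
      unfolding T_lim_def by blast
    define \<delta>a where "\<delta>a = \<delta>0 / 2"
    have \<delta>a: "0 < \<delta>a" "\<delta>a < \<delta>0" using \<delta>0 unfolding \<delta>a_def by auto
    obtain \<theta>a hva where ha: "dist \<theta>a \<theta> < \<epsilon>" "is_tdisk (idx_set ww) \<tau> hva" "matches e ww c \<delta>a \<tau> hva" "hva (tinf \<tau>) = \<theta>a"
      using h \<delta>a unfolding T_delta_def by blast
    define K where "K = \<bar>\<theta>a \<bullet> n\<bar>"
    define \<delta> where "\<delta> = min (\<delta>0 / 2) (\<delta>a * \<epsilon> / (K + 1))"
    have K0: "K \<ge> 0" unfolding K_def by simp
    have \<delta>: "0 < \<delta>" "\<delta> < \<delta>0" unfolding \<delta>_def using \<delta>0 \<delta>a \<epsilon> K0 by auto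
    obtain \<theta>b hvb where hb: "dist \<theta>b \<theta> < \<epsilon>" "is_tdisk (idx_set ww) \<tau> hvb" "matches e ww c \<delta> \<tau> hvb" "hvb (tinf \<tau>) = \<theta>b"
      using h \<delta> unfolding T_delta_def by blast
    define t where "t = \<delta> / \<delta>a"
    define z where "z = (\<lambda>V. hvb V - t *\<^sub>R hva V)"
    have "\<forall>E\<in>tedges \<tau>. \<exists>\<mu>. z (snd (ori E)) - z (fst (ori E)) = \<mu> *\<^sub>R tdir \<tau> (fst (ori E)) E"
    proof
      fix E assume E: "E \<in> tedges \<tau>"
      obtain la where la: "hva (snd (ori E)) - hva (fst (ori E)) = la *\<^sub>R tdir \<tau> (fst (ori E)) E"
        using disk_edge[OF ha(2) E] by blast
      obtain lb where lb: "hvb (snd (ori E)) - hvb (fst (ori E)) = lb *\<^sub>R tdir \<tau> (fst (ori E)) E"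
        using disk_edge[OF hb(2) E] by blast
      have "z (snd (ori E)) - z (fst (ori E)) = (hvb (snd (ori E)) - hvb (fst (ori E))) - t *\<^sub>R (hva (snd (ori E)) - hva (fst (ori E)))"
        unfolding z_def by (simp add: algebra_simps)
      also have "\<dots> = (lb - t * la) *\<^sub>R tdir \<tau> (fst (ori E)) E" using la lb by (simp add: algebra_simps)
      finally show "\<exists>\<mu>. z (snd (ori E)) - z (fst (ori E)) = \<mu> *\<^sub>R tdir \<tau> (fst (ori E)) E" by blast
    qed
    from bchoice[OF this] obtain \<mu> where
      \<mu>: "\<forall>E\<in>tedges \<tau>. z (snd (ori E)) - z (fst (ori E)) = \<mu> E *\<^sub>R tdir \<tau> (fst (ori E)) E" by blast
    have legs: "\<forall>s\<in>idx_set ww. z (tattach \<tau> s) \<bullet> e (fst s) = 0"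
    proof
      fix s assume s: "s \<in> idx_set ww"
      have "z (tattach \<tau> s) \<bullet> e (fst s) = hvb (tattach \<tau> s) \<bullet> e (fst s) - t * (hva (tattach \<tau> s) \<bullet> e (fst s))"
        unfolding z_def by (simp add: inner_diff_left)
      also have "\<dots> = \<delta> * c s - t * (\<delta>a * c s)" using disk_legs[OF ha(3) s] disk_legs[OF hb(3) s] by simp
      also have "\<dots> = 0" unfolding t_def using \<delta>a by simp
      finally show "z (tattach \<tau> s) \<bullet> e (fst s) = 0" .
    qed
    have "z (tinf \<tau>) \<bullet> n = 0" using P \<mu> legs by blast
    then have eqb: "\<theta>b \<bullet> n = t * (\<theta>a \<bullet> n)" unfolding z_def using ha(4) hb(4) by (simp add: inner_diff_left)
    have "\<bar>\<theta> \<bullet> n\<bar> \<le> \<bar>(\<theta> - \<theta>b) \<bullet> n\<bar> + \<bar>\<theta>b \<bullet> n\<bar>"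
      by (metis abs_triangle_ineq add_diff_cancel_left' diff_add_cancel inner_diff_left)
    also have "\<bar>(\<theta> - \<theta>b) \<bullet> n\<bar> \<le> norm (\<theta> - \<theta>b) * norm n" by (rule Cauchy_Schwarz_ineq2)
    also have "norm (\<theta> - \<theta>b) * norm n \<le> \<epsilon> * norm n"
      using hb(1) by (intro mult_right_mono) (auto simp: dist_norm norm_minus_commute)
    also have "\<bar>\<theta>b \<bullet> n\<bar> = t * K" unfolding eqb K_def t_def using \<delta> \<delta>a by (simp add: abs_mult)
    also have "t * K \<le> \<epsilon>"
    proof -
      have "\<delta> \<le> \<delta>a * \<epsilon> / (K + 1)" unfolding \<delta>_def by simp
      then have "t \<le> \<epsilon> / (K + 1)" unfolding t_def using \<delta>a by (simp add: field_simps)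
      then have "t * K \<le> \<epsilon> / (K + 1) * K" using K0 by (rule mult_right_mono)
      also have "\<dots> \<le> \<epsilon>" using K0 \<epsilon> by (simp add: field_simps)
      finally show ?thesis .
    qed
    finally show "\<bar>\<theta> \<bullet> n\<bar> \<le> (norm n + 1) * \<epsilon>" by (simp add: algebra_simps)
  qed
qed

lemma t1: fixes ww :: "'i::finite \<Rightarrow> nat list" shows "idx_set ww = (SIGMA i:UNIV. {1..length (ww i)})" unfolding idx_set_def by auto

lemma t2: fixes ww :: "'i::finite \<Rightarrow> nat list" shows "finite (idx_set ww)"
  unfolding t1 by simp

lemma t3: fixes ww :: "'i::finite \<Rightarrow> nat list"
  shows "\<exists>N \<in> null_sets (Pi\<^sub>M (idx_set ww) (\<lambda>_. lborel)). \<forall>c \<in> (\<Pi>\<^sub>E s\<in>idx_set ww. UNIV) - N.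
           \<forall>q::('i \<times> nat) \<Rightarrow> int. (\<Sum>s\<in>idx_set ww. real_of_int (q s) * c s) = 0 \<longrightarrow> (\<forall>s\<in>idx_set ww. q s = 0)"
  by (rule generic_null[OF t2])

theorem lemma4p3:
  fixes \<Omega> :: "real^'n^'n" and e :: "'i::finite \<Rightarrow> real^'n"
    and \<sigma> :: "(real^'n) set" and ww :: "'i \<Rightarrow> nat list"
  assumes "\<forall>j k. \<Omega> $ j $ k \<in> \<int>" and "transpose \<Omega> = - \<Omega>"
    and "rat_poly_cone \<sigma>" and "strictly_convex_cone \<sigma>"
    and "\<forall>i. e i \<in> Lambda_plus \<sigma>"
    and "\<forall>i. sorted (ww i) \<and> (\<forall>x\<in>set (ww i). 0 < x)"
  shows "\<exists>N \<in> null_sets (Pi\<^sub>M (idx_set ww) (\<lambda>_. lborel)).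
           \<forall>c \<in> (\<Pi>\<^sub>E s\<in>idx_set ww. UNIV) - N. \<forall>\<theta>::real^'n.
             (\<forall>n1 n2. lattice_vec n1 \<and> n1 \<noteq> 0 \<and> lattice_vec n2 \<and> n2 \<noteq> 0 \<and>
                 \<theta> \<bullet> n1 = 0 \<and> \<theta> \<bullet> n2 = 0 \<longrightarrow> {x. x \<bullet> n1 = 0} = {x. x \<bullet> n2 = 0})
             \<longrightarrow> (\<forall>\<tau> \<in> T_lim \<Omega> e ww c \<theta>. trivalent (idx_set ww) \<tau>)"
proof -
  have finS: "finite (idx_set ww)" by (rule t2)
  have latt: "\<forall>i. lattice_vec (e i)" using assms(5) unfolding Lambda_plus_def by simp
  from t3[of ww] obtain N where N: "N \<in> null_sets (Pi\<^sub>M (idx_set ww) (\<lambda>_. lborel))"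
    and gen: "\<forall>c \<in> (\<Pi>\<^sub>E s\<in>idx_set ww. UNIV) - N.
           \<forall>q::('i \<times> nat) \<Rightarrow> int. (\<Sum>s\<in>idx_set ww. real_of_int (q s) * c s) = 0 \<longrightarrow> (\<forall>s\<in>idx_set ww. q s = 0)"
    by (rule bexE)
  show ?thesis
  proof (rule bexI[OF _ N], intro ballI allI impI)
    fix c \<theta> \<tau>
    assume c: "c \<in> (\<Pi>\<^sub>E s\<in>idx_set ww. UNIV) - N"
      and h\<theta>: "\<forall>n1 n2. lattice_vec n1 \<and> n1 \<noteq> 0 \<and> lattice_vec n2 \<and> n2 \<noteq> 0 \<and>
                 \<theta> \<bullet> n1 = 0 \<and> \<theta> \<bullet> n2 = 0 \<longrightarrow> {x. x \<bullet> n1 = 0} = {x. x \<bullet> n2 = 0}"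
      and \<tau>: "\<tau> \<in> T_lim \<Omega> e ww c \<theta>"
    show "trivalent (idx_set ww) \<tau>"
    proof (rule ccontr)
      assume nt: "\<not> trivalent (idx_set ww) \<tau>"
      have genc: "\<forall>q::('i \<times> nat) \<Rightarrow> int. (\<Sum>s\<in>idx_set ww. real_of_int (q s) * c s) = 0 \<longrightarrow> (\<forall>s\<in>idx_set ww. q s = 0)"
        using gen c by blast
      have "\<forall>\<epsilon>>0. \<exists>\<delta>0>0. \<forall>\<delta>. 0 < \<delta> \<and> \<delta> < \<delta>0 \<longrightarrow> (\<exists>\<theta>'. dist \<theta>' \<theta> < \<epsilon> \<and> \<tau> \<in> T_delta \<Omega> e ww c \<delta> \<theta>')"
        using \<tau> unfolding T_lim_def by simp
      from this[rule_format, OF zero_less_one] obtain \<delta>0 where \<delta>0: "\<delta>0 > 0" and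
        h: "\<forall>\<delta>. 0 < \<delta> \<and> \<delta> < \<delta>0 \<longrightarrow> (\<exists>\<theta>'. dist \<theta>' \<theta> < 1 \<and> \<tau> \<in> T_delta \<Omega> e ww c \<delta> \<theta>')"
        by blast
      define \<delta>1 where "\<delta>1 = \<delta>0 / 2"
      have \<delta>1: "0 < \<delta>1" "\<delta>1 < \<delta>0" using \<delta>0 unfolding \<delta>1_def by auto
      from h[rule_format, OF conjI[OF \<delta>1]] obtain \<theta>1 where "\<tau> \<in> T_delta \<Omega> e ww c \<delta>1 \<theta>1" by blast
      then obtain hv1 where h1: "is_tdisk (idx_set ww) \<tau> hv1" "matches e ww c \<delta>1 \<tau> hv1"
        unfolding T_delta_def by blast
      have m1: "\<forall>s\<in>idx_set ww. hv1 (tattach \<tau> s) \<bullet> e (fst s) = \<delta>1 * c s"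
        using disk_legs[OF h1(2)] by blast
      have "\<delta>1 \<noteq> 0" using \<delta>1 by simp
      from key[OF finS latt genc h1(1) m1 this nt] obtain n1 n2 where nn: "lattice_vec n1 \<and> n1 \<noteq> 0 \<and> lattice_vec n2 \<and> n2 \<noteq> 0 \<and> {x. x \<bullet> n1 = 0} \<noteq> {x. x \<bullet> n2 = 0} \<and>
         (\<forall>z \<mu>. (\<forall>E\<in>tedges \<tau>. z (snd (ori E)) - z (fst (ori E)) = \<mu> E *\<^sub>R tdir \<tau> (fst (ori E)) E) \<and>
            (\<forall>s\<in>idx_set ww. z (tattach \<tau> s) \<bullet> e (fst s) = 0) \<longrightarrow> z (tinf \<tau>) \<bullet> n1 = 0 \<and> z (tinf \<tau>) \<bullet> n2 = 0)"
        by (elim exE)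
      then have n: "lattice_vec n1" "n1 \<noteq> 0" "lattice_vec n2" "n2 \<noteq> 0" "{x. x \<bullet> n1 = 0} \<noteq> {x. x \<bullet> n2 = 0}"
        by simp_all
      from nn have P: "\<forall>z \<mu>. (\<forall>E\<in>tedges \<tau>. z (snd (ori E)) - z (fst (ori E)) = \<mu> E *\<^sub>R tdir \<tau> (fst (ori E)) E) \<and>
            (\<forall>s\<in>idx_set ww. z (tattach \<tau> s) \<bullet> e (fst s) = 0) \<longrightarrow> z (tinf \<tau>) \<bullet> n1 = 0 \<and> z (tinf \<tau>) \<bullet> n2 = 0"
        by (elim conjE)
      have P1: "\<forall>z \<mu>. (\<forall>E\<in>tedges \<tau>. z (snd (ori E)) - z (fst (ori E)) = \<mu> E *\<^sub>R tdir \<tau> (fst (ori E)) E) \<and>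
            (\<forall>s\<in>idx_set ww. z (tattach \<tau> s) \<bullet> e (fst s) = 0) \<longrightarrow> z (tinf \<tau>) \<bullet> n1 = 0"
        using P by blast
      have P2: "\<forall>z \<mu>. (\<forall>E\<in>tedges \<tau>. z (snd (ori E)) - z (fst (ori E)) = \<mu> E *\<^sub>R tdir \<tau> (fst (ori E)) E) \<and>
            (\<forall>s\<in>idx_set ww. z (tattach \<tau> s) \<bullet> e (fst s) = 0) \<longrightarrow> z (tinf \<tau>) \<bullet> n2 = 0"
        using P by blast
      have "\<theta> \<bullet> n1 = 0" by (rule lim_zero[OF \<tau> P1])
      moreover have "\<theta> \<bullet> n2 = 0" by (rule lim_zero[OF \<tau> P2])
      ultimately have "{x. x \<bullet> n1 = 0} = {x. x \<bullet> n2 = 0}" using h\<theta>[rule_format, of n1 n2] n(1-4) by simp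
      then show False using n(5) by simp
    qed
  qed
qed

end
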